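(* Let $X$ be a compact Riemann surface of genus $g\geq 2$ and $G\subseteq\mathrm{Aut}(X)$ a subgroup having a quotient isomorphic to $C_4$. Then $|G|\leq 10(g-1)$, except in the following cases: $G$ is covered by $\Gamma(0;3,4,4)$ and $|G|=12(g-1)$; $G$ is covered by $\Gamma(0;2,4,8)$ and $|G|=16(g-1)$; $G$ is covered by $\Gamma(0;2,4,12)$ and $|G|=12(g-1)$; $G$ is covered by $\Gamma(0;2,4,16)$ and $|G|=\frac{32}{3}(g-1)$.
   Context: $\mathrm{Aut}(X)$ denotes the group of conformal automorphisms of $X$; $C_n$ is the cyclic group of order $n$. For $G\subseteq \mathrm{Aut}(X)$ there is a Fuchsian group $\Gamma=\Gamma(h;m_1,\dots,m_r)$ acting on the upper half plane $\mathcal U$ and a torsion-free normal subgroup $K\subseteq\Gamma$ such that $\mathcal U/K\cong X$, $\Gamma/K\cong G$ (compatibly with the actions) and $\mathcal U/\Gamma\cong X/G$; one says $G$ is covered by $\Gamma$. Here $h$ is the genus of $X/G$ and the integers $m_i\ge 2$ (periods) are the orders of the branching; one has $|G|=\frac{2(g-1)}{2h-2+\sum_{i=1}^r(1-1/m_i)}$. For $h=0$, $\Gamma(0;m_1,\dots,m_r)\cong\langle x_1,\dots,x_r\mid x_1^{m_1}=\dots=x_r^{m_r}=1,\ x_1x_2\cdots x_r=1\rangle$. *)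

theory Defs
  imports "HOL-Algebra.Algebra" "HOL-Library.Multiset"
begin

definition list_prod :: "('a, 'b) monoid_scheme \<Rightarrow> 'a list \<Rightarrow> 'a" where
  "list_prod G xs = foldr (\<lambda>x y. x \<otimes>\<^bsub>G\<^esub> y) xs \<one>\<^bsub>G\<^esub>"

definition commutator :: "('a, 'b) monoid_scheme \<Rightarrow> 'a \<Rightarrow> 'a \<Rightarrow> 'a" where
  "commutator G a b = a \<otimes>\<^bsub>G\<^esub> b \<otimes>\<^bsub>G\<^esub> inv\<^bsub>G\<^esub> a \<otimes>\<^bsub>G\<^esub> inv\<^bsub>G\<^esub> b"

(* A generating vector of signature (h; m_1,...,m_r) for G, i.e. the images
   a_i, b_i, x_j of the canonical generators of
   Gamma(h; m_1..m_r) = <a_1,b_1,..,a_h,b_h,x_1..x_r | x_j^{m_j}, prod[a_i,b_i] x_1..x_r = 1>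
   under a surface-kernel epimorphism Gamma -> G (kernel torsion free
   <=> ord(x_j) = m_j exactly). *)
definition gen_vector ::
  "('a, 'b) monoid_scheme \<Rightarrow> nat \<Rightarrow> nat list \<Rightarrow> (nat \<Rightarrow> 'a) \<Rightarrow> (nat \<Rightarrow> 'a) \<Rightarrow> (nat \<Rightarrow> 'a) \<Rightarrow> bool" where
  "gen_vector G h ms a b x \<longleftrightarrow>
     (\<forall>i<h. a i \<in> carrier G \<and> b i \<in> carrier G) \<and>
     (\<forall>j<length ms. x j \<in> carrier G \<and> group.ord G (x j) = ms ! j) \<and>
     generate G ({a i | i. i < h} \<union> {b i | i. i < h} \<union> {x j | j. j < length ms}) = carrier G \<and>
     list_prod G (map (\<lambda>i. commutator G (a i) (b i)) [0..<h] @ map x [0..<length ms]) = \<one>\<^bsub>G\<^esub>"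

definition covered_by :: "('a, 'b) monoid_scheme \<Rightarrow> nat \<Rightarrow> nat list \<Rightarrow> bool" where
  "covered_by G h ms \<longleftrightarrow> (\<forall>m \<in> set ms. m \<ge> 2) \<and> (\<exists>a b x. gen_vector G h ms a b x)"

definition rh_genus :: "nat \<Rightarrow> nat \<Rightarrow> nat list \<Rightarrow> nat \<Rightarrow> bool" where
  "rh_genus n h ms g \<longleftrightarrow>
     real n * (2 * real h - 2 + (\<Sum>m\<leftarrow>ms. 1 - 1 / real m)) = 2 * (real g - 1)"

end

theory Submission
  imports Defs
begin

lemma inv_le_aux: "0 < k \<Longrightarrow> k \<le> (q::nat) \<Longrightarrow> 1 / real q \<le> 1 / real k"
  by (simp add: frac_le)

lemma sum_lb:
  assumes "\<forall>m\<in>set ms. (m::nat) \<ge> 2"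
  shows "real (length ms) / 2 \<le> (\<Sum>m\<leftarrow>ms. 1 - 1 / real m)"
  using assms
proof (induction ms)
  case Nil then show ?case by simp
next
  case (Cons m ms)
  have "1 / real m \<le> 1/2" using Cons.prems inv_le_aux[of 2 m] by simp
  moreover have "real (length ms) / 2 \<le> (\<Sum>m\<leftarrow>ms. 1 - 1 / real m)" using Cons by simp
  ultimately show ?case by simp
qed

lemma sum_ub:
  assumes "\<forall>m\<in>set ms. (m::nat) \<ge> 2"
  shows "(\<Sum>m\<leftarrow>ms. 1 - 1 / real m) \<le> real (length ms)"
  using assms
proof (induction ms)
  case Nil then show ?case by simp
next
  case (Cons m ms)
  have "0 \<le> 1 / real m" by simp
  moreover have "(\<Sum>m\<leftarrow>ms. 1 - 1 / real m) \<le> real (length ms)" using Cons by simp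
  moreover have "(\<Sum>m\<leftarrow>m#ms. 1 - 1 / real m) = 1 - 1 / real m + (\<Sum>m\<leftarrow>ms. 1 - 1 / real m)" by simp
  moreover have "real (length (m#ms)) = real (length ms) + 1" by simp
  ultimately show ?case by linarith
qed

lemma three:
  fixes p q s :: nat
  assumes p: "p \<ge> 2" and q: "4 dvd q" "q \<ge> 2" and s: "4 dvd s" "s \<ge> 2"
    and T: "T = 1 - 1 / real p - 1 / real q - 1 / real s" and Tpos: "T > 0"
  shows "T \<ge> 1/5 \<or> (mset [p,q,s] = {#3,4,4#} \<and> T = 1/6)
     \<or> (mset [p,q,s] = {#2,4,8#} \<and> T = 1/8)
     \<or> (mset [p,q,s] = {#2,4,12#} \<and> T = 1/6)
     \<or> (mset [p,q,s] = {#2,4,16#} \<and> T = 3/16)"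
proof -
  have q4: "q \<ge> 4" and s4: "s \<ge> 4" using q s by (auto elim!: dvdE)
  have qc: "q = 4 \<or> q = 8 \<or> q = 12 \<or> q = 16 \<or> q \<ge> 20" using q by (auto elim!: dvdE)
  have sc: "s = 4 \<or> s = 8 \<or> s = 12 \<or> s = 16 \<or> s \<ge> 20" using s by (auto elim!: dvdE)
  have iq: "1 / real q \<le> 1/4" using inv_le_aux[of 4 q] q4 by simp
  have is': "1 / real s \<le> 1/4" using inv_le_aux[of 4 s] s4 by simp
  consider "p \<ge> 4" | "p = 3" | "p = 2" using p by linarith
  then show ?thesis
  proof cases
    case 1
    have "1 / real p \<le> 1/4" using inv_le_aux[of 4 p] 1 by simp
    then show ?thesis using iq is' T by linarith
  next
    case 2
    show ?thesis
    proof (cases "q = 4 \<and> s = 4")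
      case True then show ?thesis using 2 T by simp
    next
      case False
      then have "q \<ge> 8 \<or> s \<ge> 8" using qc sc by auto
      then have "1 / real q \<le> 1/8 \<or> 1 / real s \<le> 1/8"
        using inv_le_aux[of 8 q] inv_le_aux[of 8 s] by auto
      then show ?thesis using iq is' T 2 by auto
    qed
  next
    case 3
    show ?thesis
    proof (cases "q \<ge> 8 \<and> s \<ge> 8")
      case True
      then have "1 / real q \<le> 1/8" "1 / real s \<le> 1/8"
        using inv_le_aux[of 8 q] inv_le_aux[of 8 s] by auto
      then show ?thesis using T 3 by auto
    next
      case False
      then have "q = 4 \<or> s = 4" using qc sc by auto
      then show ?thesis
      proof
        assume q4: "q = 4"
        consider "s = 4" | "s = 8" | "s = 12" | "s = 16" | "s \<ge> 20" using sc by blast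
        then show ?thesis
        proof cases
          case 5
          have "1 / real s \<le> 1/20" using inv_le_aux[of 20 s] 5 by simp
          then show ?thesis using T 3 q4 by auto
        qed (use T Tpos 3 q4 in auto)
      next
        assume s4: "s = 4"
        consider "q = 4" | "q = 8" | "q = 12" | "q = 16" | "q \<ge> 20" using qc by blast
        then show ?thesis
        proof cases
          case 5
          have "1 / real q \<le> 1/20" using inv_le_aux[of 20 q] 5 by simp
          then show ?thesis using T 3 s4 by auto
        qed (use T Tpos 3 s4 in \<open>auto simp: add_mset_commute\<close>)
      qed
    qed
  qed
qed

abbreviation "Z4 \<equiv> integer_mod_group 4"

lemma odd_dvd4:
  assumes G: "group G" and hom: "\<phi> \<in> hom G Z4" and xc: "y \<in> carrier G"
    and od: "odd (\<phi> y)"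
  shows "4 dvd group.ord G y"
proof -
  let ?m = "group.ord G y"
  have "y [^]\<^bsub>G\<^esub> ?m = \<one>\<^bsub>G\<^esub>" using group.pow_ord_eq_1[OF G xc] .
  then have "\<phi> (y [^]\<^bsub>G\<^esub> ?m) = 0" using hom_one[OF hom G] by simp
  moreover have "\<phi> (y [^]\<^bsub>G\<^esub> ?m) = (int ?m * \<phi> y) mod 4"
    using hom_nat_pow[OF hom xc G] by simp
  ultimately have e: "(int ?m * \<phi> y) mod 4 = 0" by simp
  have "\<phi> y \<in> carrier Z4" using hom xc by (auto simp: hom_def Pi_def)
  then have "\<phi> y = 1 \<or> \<phi> y = 3" using od by (simp add: carrier_integer_mod_group) presburger
  then have "int 4 dvd int ?m" using e by auto presburger+
  then show ?thesis by (simp only: of_nat_dvd_iff)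
qed

lemma ev_neg_mod: "even (a::int) \<Longrightarrow> even ((- a) mod 4)"
  by presburger

lemma ev_add_mod: "even (a::int) \<Longrightarrow> even b \<Longrightarrow> even ((a + b) mod 4)"
  by presburger

lemma hom_list_prod:
  assumes G: "group G" and hom: "\<phi> \<in> hom G Z4"
  shows "set xs \<subseteq> carrier G \<Longrightarrow> list_prod G xs \<in> carrier G \<and> \<phi> (list_prod G xs) = sum_list (map \<phi> xs) mod 4"
proof (induction xs)
  case Nil
  then show ?case using hom_one[OF hom G] by (simp add: list_prod_def group.is_monoid[OF G] monoid.one_closed)
next
  case (Cons y xs)
  then have y: "y \<in> carrier G" and IH: "list_prod G xs \<in> carrier G" "\<phi> (list_prod G xs) = sum_list (map \<phi> xs) mod 4" by auto
  have eq: "list_prod G (y # xs) = y \<otimes>\<^bsub>G\<^esub> list_prod G xs" by (simp add: list_prod_def)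
  show ?case unfolding eq using y IH hom_mult[OF hom y IH(1)]
    by (simp add: monoid.m_closed[OF group.is_monoid[OF G]] mod_add_right_eq)
qed

lemma par3: "odd (a::int) \<or> odd b \<or> odd c \<Longrightarrow> even (a + b + c) \<Longrightarrow>
  (odd a \<and> odd b) \<or> (odd a \<and> odd c) \<or> (odd b \<and> odd c)"
  by presburger

lemma exists_odd:
  assumes G: "group G" and hom: "\<phi> \<in> hom G Z4" and surj: "\<phi> ` carrier G = carrier Z4"
    and gv: "gen_vector G 0 ms a b x"
  shows "\<exists>j<length ms. odd (\<phi> (x j))"
proof (rule ccontr)
  assume nex: "\<not> ?thesis"
  interpret group G by (rule G)
  have gh: "group_hom G Z4 \<phi>" using G hom by (simp add: group_hom_def group_hom_axioms_def)
  let ?H = "{g \<in> carrier G. even (\<phi> g)}"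
  have phic: "\<And>g. g \<in> carrier G \<Longrightarrow> \<phi> g \<in> carrier Z4" using hom by (auto simp: hom_def Pi_def)
  have sub: "subgroup ?H G"
  proof (rule subgroupI)
    show "?H \<noteq> {}" using hom_one[OF hom G] by (auto intro!: exI[of _ "\<one>\<^bsub>G\<^esub>"])
  next
    fix g assume g: "g \<in> ?H"
    then have "\<phi> (inv\<^bsub>G\<^esub> g) = (- \<phi> g) mod 4" using group_hom.hom_inv[OF gh] phic by simp
    moreover have "even ((- \<phi> g) mod 4)" using g ev_neg_mod by blast
    moreover have "inv\<^bsub>G\<^esub> g \<in> carrier G" using g by blast
    ultimately show "inv\<^bsub>G\<^esub> g \<in> ?H" by simp
  next
    fix g g' assume g: "g \<in> ?H" and g': "g' \<in> ?H"
    then have "\<phi> (g \<otimes>\<^bsub>G\<^esub> g') = (\<phi> g + \<phi> g') mod 4" using hom_mult[OF hom] by simp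
    then show "g \<otimes>\<^bsub>G\<^esub> g' \<in> ?H" using g g' ev_add_mod by simp
  qed auto
  have gen: "generate G {x j | j. j < length ms} = carrier G" using gv by (simp add: gen_vector_def)
  have "{x j | j. j < length ms} \<subseteq> ?H" using nex gv by (auto simp: gen_vector_def)
  then have "carrier G \<subseteq> ?H" using generate_subgroup_incl[OF _ sub] gen by auto
  moreover have "(1::int) \<in> \<phi> ` carrier G" using surj by simp
  ultimately show False by auto
qed

lemma even_sum3:
  assumes G: "group G" and hom: "\<phi> \<in> hom G Z4"
    and gv: "gen_vector G 0 [p,q,s] a b x"
  shows "even (\<phi> (x 0) + \<phi> (x 1) + \<phi> (x 2))"
proof -
  have u: "[0..<3] = [0::nat,1,2]" by (simp add: upt_rec)
  have len: "length [p,q,s] = 3" by simp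
  have "list_prod G (map (\<lambda>i. commutator G (a i) (b i)) [0..<0] @ map x [0..<length [p,q,s]]) = \<one>\<^bsub>G\<^esub>"
    using gv unfolding gen_vector_def by blast
  then have lp: "list_prod G (map x [0..<3]) = \<one>\<^bsub>G\<^esub>"
    by (simp only: len upt_0 list.map(1) append.simps(1))
  have "set (map x [0..<3]) \<subseteq> carrier G" using gv by (auto simp: gen_vector_def)
  from hom_list_prod[OF G hom this] lp hom_one[OF hom G]
  have "sum_list (map \<phi> (map x [0..<3])) mod 4 = 0" by simp
  then have "(\<phi> (x 0) + (\<phi> (x 1) + \<phi> (x 2))) mod 4 = 0" unfolding u by simp
  then show ?thesis by presburger
qed

theorem lemma3p4:
  fixes G :: "('a, 'b) monoid_scheme" and h g :: nat and ms :: "nat list"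
  assumes "group G" and "finite (carrier G)"
    and "covered_by G h ms"
    and "g \<ge> 2"
    and "rh_genus (card (carrier G)) h ms g"
    and "\<exists>\<phi>. \<phi> \<in> epi G (integer_mod_group 4)"
  shows "real (card (carrier G)) \<le> 10 * (real g - 1)
       \<or> (h = 0 \<and> mset ms = {#3, 4, 4#} \<and> real (card (carrier G)) = 12 * (real g - 1))
       \<or> (h = 0 \<and> mset ms = {#2, 4, 8#} \<and> real (card (carrier G)) = 16 * (real g - 1))
       \<or> (h = 0 \<and> mset ms = {#2, 4, 12#} \<and> real (card (carrier G)) = 12 * (real g - 1))
       \<or> (h = 0 \<and> mset ms = {#2, 4, 16#} \<and> real (card (carrier G)) = 32 / 3 * (real g - 1))"
proof -
  note G = assms(1)
  obtain \<phi> where epi: "\<phi> \<in> epi G Z4" using assms(6) by blast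
  then have hom: "\<phi> \<in> hom G Z4" and surj: "\<phi> ` carrier G = carrier Z4" by (auto simp: epi_def)
  obtain a b x where gv: "gen_vector G h ms a b x" and ge2: "\<forall>m\<in>set ms. m \<ge> 2"
    using assms(3) by (auto simp: covered_by_def)
  define n where "n = card (carrier G)"
  define S where "S = (\<Sum>m\<leftarrow>ms. 1 - 1 / real m)"
  define T where "T = 2 * real h - 2 + S"
  have npos: "n > 0" unfolding n_def using assms(2) monoid.one_closed[OF group.is_monoid[OF G]] card_gt_0_iff by blast
  have rh: "real n * T = 2 * (real g - 1)" using assms(5) by (simp add: rh_genus_def n_def T_def S_def)
  have Tpos: "T > 0"
  proof (rule ccontr)
    assume "\<not> T > 0"
    then have "real n * T \<le> 0" using npos by (simp add: mult_nonneg_nonpos)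
    then show False using rh assms(4) by simp
  qed
  have Slb: "real (length ms) / 2 \<le> S" using sum_lb[OF ge2] by (simp add: S_def)
  have Sub: "S \<le> real (length ms)" using sum_ub[OF ge2] by (simp add: S_def)
  have key: "T \<ge> 1/5 \<or> (h = 0 \<and> mset ms = {#3,4,4#} \<and> T = 1/6)
     \<or> (h = 0 \<and> mset ms = {#2,4,8#} \<and> T = 1/8)
     \<or> (h = 0 \<and> mset ms = {#2,4,12#} \<and> T = 1/6)
     \<or> (h = 0 \<and> mset ms = {#2,4,16#} \<and> T = 3/16)"
  proof (cases "h = 0")
    case False
    show ?thesis
    proof (cases "h = 1")
      case True
      then have "ms \<noteq> []" using Tpos by (auto simp: T_def S_def)
      then have "real (length ms) \<ge> 1" by (cases ms) auto
      then show ?thesis using Slb True by (simp add: T_def)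
    next
      case False
      then have "real h \<ge> 2" using \<open>h \<noteq> 0\<close> by simp
      then show ?thesis using Slb by (simp add: T_def)
    qed
  next
    case h0: True
    have gv0: "gen_vector G 0 ms a b x" using gv h0 by simp
    obtain j where j: "j < length ms" "odd (\<phi> (x j))" using exists_odd[OF G hom surj gv0] by blast
    have xc: "\<And>j. j < length ms \<Longrightarrow> x j \<in> carrier G \<and> group.ord G (x j) = ms ! j"
      using gv0 by (simp add: gen_vector_def)
    have d4: "4 dvd ms ! j" if jl: "j < length ms" and jo: "odd (\<phi> (x j))" for j
    proof -
      have c: "x j \<in> carrier G" and o: "group.ord G (x j) = ms ! j" using xc[OF jl] by auto
      show ?thesis using odd_dvd4[OF G hom c jo] unfolding o .
    qed
    consider "length ms \<le> 2" | "length ms = 3" | "length ms \<ge> 4" by linarith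
    then show ?thesis
    proof cases
      case 1
      then have "S \<le> 2" using Sub by simp
      then show ?thesis using Tpos h0 by (simp add: T_def)
    next
      case 3
      define m where "m = ms ! j"
      have mset: "m \<in> set ms" using j by (simp add: m_def)
      have "4 dvd m" using d4 j by (simp add: m_def)
      moreover have "m \<ge> 2" using mset ge2 by auto
      ultimately have "m \<ge> 4" by (auto elim!: dvdE)
      then have im: "1 / real m \<le> 1/4" using inv_le_aux[of 4 m] by simp
      have "S = (1 - 1 / real m) + (\<Sum>m\<leftarrow>remove1 m ms. 1 - 1 / real m)"
        unfolding S_def by (rule sum_list_map_remove1[OF mset])
      moreover have "real (length (remove1 m ms)) / 2 \<le> (\<Sum>m\<leftarrow>remove1 m ms. 1 - 1 / real m)"
      proof (rule sum_lb)
        show "\<forall>m\<in>set (remove1 m ms). 2 \<le> m" using ge2 set_remove1_subset[of m ms] by blast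
      qed
      moreover have "length (remove1 m ms) = length ms - 1" using mset by (simp add: length_remove1)
      then have "real (length (remove1 m ms)) \<ge> 3" using 3 by simp
      ultimately have "S \<ge> 3/4 + 3/2" using im by linarith
      then show ?thesis by (simp add: T_def h0)
    next
      case 2
      then obtain p q s where ms: "ms = [p,q,s]"
        by (auto simp: numeral_3_eq_3 length_Suc_conv)
      have T3: "T = 1 - 1 / real p - 1 / real q - 1 / real s" by (simp add: T_def S_def ms h0)
      have ev: "even (\<phi> (x 0) + \<phi> (x 1) + \<phi> (x 2))" using even_sum3[OF G hom] gv0 ms by simp
      have "odd (\<phi> (x 0)) \<or> odd (\<phi> (x 1)) \<or> odd (\<phi> (x 2))" 
      proof -
        have "j < 3" using j ms by simp
        then have "j = 0 \<or> j = 1 \<or> j = 2" by linarith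
        then show ?thesis using j(2) by (elim disjE) simp_all
      qed
      then have par: "(odd (\<phi> (x 0)) \<and> odd (\<phi> (x 1))) \<or> (odd (\<phi> (x 0)) \<and> odd (\<phi> (x 2)))
          \<or> (odd (\<phi> (x 1)) \<and> odd (\<phi> (x 2)))" using ev par3 by blast
      have dp: "4 dvd p" if "odd (\<phi> (x 0))" using d4[of 0] that ms by simp
      have dq: "4 dvd q" if "odd (\<phi> (x 1))" using d4[of 1] that ms by simp
      have ds: "4 dvd s" if "odd (\<phi> (x 2))" using d4[of 2] that ms by simp
      have dd: "(4 dvd p \<and> 4 dvd q) \<or> (4 dvd p \<and> 4 dvd s) \<or> (4 dvd q \<and> 4 dvd s)"
        using par dp dq ds by blast
      have g2: "p \<ge> 2" "q \<ge> 2" "s \<ge> 2" using ge2 ms by auto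
      from dd show ?thesis
      proof (elim disjE conjE)
        assume d: "4 dvd p" "4 dvd q"
        have "T = 1 - 1/real s - 1/real p - 1/real q" using T3 by linarith
        from three[OF g2(3) d(1) g2(1) d(2) g2(2) this Tpos]
        moreover have "mset [s,p,q] = mset ms" by (simp add: ms add_mset_commute)
        ultimately show ?thesis using h0 by metis
      next
        assume d: "4 dvd p" "4 dvd s"
        have "T = 1 - 1/real q - 1/real p - 1/real s" using T3 by linarith
        from three[OF g2(2) d(1) g2(1) d(2) g2(3) this Tpos]
        moreover have "mset [q,p,s] = mset ms" by (simp add: ms add_mset_commute)
        ultimately show ?thesis using h0 by metis
      next
        assume d: "4 dvd q" "4 dvd s"
        from three[OF g2(1) d(1) g2(2) d(2) g2(3) T3 Tpos]
        moreover have "mset [p,q,s] = mset ms" by (simp add: ms)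
        ultimately show ?thesis using h0 by metis
      qed
    qed
  qed
  have fin: "real n \<le> 10 * (real g - 1)" if "T \<ge> 1/5"
  proof -
    have "real n * (1/5) \<le> real n * T" using that npos by (intro mult_left_mono) auto
    then show ?thesis using rh by simp
  qed
  from key show ?thesis
  proof (elim disjE)
    assume "1/5 \<le> T" then show ?thesis using fin by (simp add: n_def)
  next
    assume a: "h = 0 \<and> mset ms = {#3,4,4#} \<and> T = 1/6"
    then have Tc: "T = 1/6" by blast
    have "real n * (1/6) = 2 * (real g - 1)" using rh unfolding Tc .
    then have "real (card (carrier G)) = 12 * (real g - 1)" unfolding n_def by linarith
    then show ?thesis using a by blast
  next
    assume a: "h = 0 \<and> mset ms = {#2,4,8#} \<and> T = 1/8"
    then have Tc: "T = 1/8" by blast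
    have "real n * (1/8) = 2 * (real g - 1)" using rh unfolding Tc .
    then have "real (card (carrier G)) = 16 * (real g - 1)" unfolding n_def by linarith
    then show ?thesis using a by blast
  next
    assume a: "h = 0 \<and> mset ms = {#2,4,12#} \<and> T = 1/6"
    then have Tc: "T = 1/6" by blast
    have "real n * (1/6) = 2 * (real g - 1)" using rh unfolding Tc .
    then have "real (card (carrier G)) = 12 * (real g - 1)" unfolding n_def by linarith
    then show ?thesis using a by blast
  next
    assume a: "h = 0 \<and> mset ms = {#2,4,16#} \<and> T = 3/16"
    then have Tc: "T = 3/16" by blast
    have "real n * (3/16) = 2 * (real g - 1)" using rh unfolding Tc .
    then have "real (card (carrier G)) = 32 / 3 * (real g - 1)" unfolding n_def by linarith
    then show ?thesis using a by blast
  qed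
qed

end
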